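(* Let $\mathbf A\in\mathbb R^{n\times p}$ have columns with $\mathbf 1^T\mathbf a_k=0$ and $\|\mathbf a_k\|_2=1$ for $k=1,\dots,p$, and let $\rho_{ij}=\mathbf a_i^T\mathbf a_j$. Let $\mathbf y\in\mathbb R^n$, let $\mathbf w$ be a weight vector as in the context and $\Delta:=\min\{w_l-w_{l+1}: l=1,\dots,p-1\}$. Let $\widehat{\mathbf x}$ be any minimizer of $\|\mathbf A\mathbf x-\mathbf y\|_1+\Omega_{\mathbf w}(\mathbf x)$ over $\mathbf x\in\mathbb R^p$. Then for every pair $(i,j)$ with $\sqrt{n(2-2\rho_{ij}\operatorname{sign}(\widehat x_i\widehat x_j))}<\Delta$, we have $|\widehat x_i|=|\widehat x_j|$.
   Context: $\mathbf w=(w_1,\dots,w_p)\in\mathbb R^p_+$ satisfies $w_1\ge w_2\ge\cdots\ge w_p\ge0$ and $w_1>0$. The ordered weighted $\ell_1$ (OWL) norm is $\Omega_{\mathbf w}(\mathbf x)=\sum_{i=1}^p w_i|x|_{[i]}$, where $|x|_{[i]}$ denotes the $i$-th largest component of $\mathbf x$ in magnitude. $\mathbf a_k$ is the $k$-th column of $\mathbf A$, $\mathbf 1$ the all-ones vector, $\operatorname{sign}$ the sign function. *)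

theory Defs
  imports Complex_Main
begin

(* Vectors in R^p are functions nat => real, only indices 0..<p matter (0-based).
   Matrices in R^{n x p} are functions nat => nat => real, A r k = entry (row r, column k). *)

definition abs_sorted_desc :: "nat \<Rightarrow> (nat \<Rightarrow> real) \<Rightarrow> real list" where
  "abs_sorted_desc p x = rev (sort (map (\<lambda>k. \<bar>x k\<bar>) [0..<p]))"

definition owl :: "nat \<Rightarrow> (nat \<Rightarrow> real) \<Rightarrow> (nat \<Rightarrow> real) \<Rightarrow> real" where
  "owl p w x = (\<Sum>i<p. w i * (abs_sorted_desc p x ! i))"

definition owl_weights :: "nat \<Rightarrow> (nat \<Rightarrow> real) \<Rightarrow> bool" where
  "owl_weights p w \<longleftrightarrow> 0 < p \<and> (\<forall>i<p. 0 \<le> w i) \<and>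
     (\<forall>i j. i \<le> j \<longrightarrow> j < p \<longrightarrow> w j \<le> w i) \<and> 0 < w 0"

definition owl_gap :: "nat \<Rightarrow> (nat \<Rightarrow> real) \<Rightarrow> real" where
  "owl_gap p w = Min {w l - w (Suc l) | l. Suc l < p}"

definition owl_l1_obj :: "nat \<Rightarrow> nat \<Rightarrow> (nat \<Rightarrow> nat \<Rightarrow> real) \<Rightarrow> (nat \<Rightarrow> real)
     \<Rightarrow> (nat \<Rightarrow> real) \<Rightarrow> (nat \<Rightarrow> real) \<Rightarrow> real" where
  "owl_l1_obj n p A y w x = (\<Sum>r<n. \<bar>(\<Sum>k<p. A r k * x k) - y r\<bar>) + owl p w x"

end

theory Submission imports Defs "HOL-Library.Multiset" "HOL-Combinatorics.Permutations" "HOL-Analysis.Convex" begin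

fun wsum :: "(nat \<Rightarrow> real) \<Rightarrow> real list \<Rightarrow> real" where
  "wsum w [] = 0"
| "wsum w (a # xs) = w 0 * a + wsum (w \<circ> Suc) xs"

lemma wsum_eq: "wsum w xs = (\<Sum>k<length xs. w k * xs ! k)"
proof (induction xs arbitrary: w)
  case (Cons a xs)
  show ?case
    unfolding length_Cons sum.lessThan_Suc_shift using Cons by (simp add: comp_def)
qed simp

fun ins :: "real \<Rightarrow> real list \<Rightarrow> real list" where
  "ins a [] = [a]"
| "ins a (z # zs) = (if z \<le> a then a # z # zs else z # ins a zs)"

fun dsort :: "real list \<Rightarrow> real list" where
  "dsort [] = []"
| "dsort (a # xs) = ins a (dsort xs)"

lemma mset_ins: "mset (ins a zs) = add_mset a (mset zs)"
  by (induction zs) auto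

lemma set_ins: "set (ins a zs) = insert a (set zs)"
  by (induction zs) auto

lemma sorted_ins: "sorted_wrt (\<ge>) zs \<Longrightarrow> sorted_wrt (\<ge>) (ins a zs)"
  by (induction zs) (auto simp: set_ins)

lemma mset_dsort: "mset (dsort xs) = mset xs"
  by (induction xs) (auto simp: mset_ins)

lemma sorted_dsort: "sorted_wrt (\<ge>) (dsort xs)"
  by (induction xs) (auto simp: sorted_ins)

definition anti :: "(nat \<Rightarrow> real) \<Rightarrow> bool" where
  "anti w \<longleftrightarrow> (\<forall>i j. i \<le> j \<longrightarrow> w j \<le> w i)"

lemma anti_Suc: "anti w \<Longrightarrow> anti (w \<circ> Suc)"
  by (simp add: anti_def)

lemma wsum_ins:
  "sorted_wrt (\<ge>) zs \<Longrightarrow> anti w \<Longrightarrow> w 0 * a + wsum (w \<circ> Suc) zs \<le> wsum w (ins a zs)"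
proof (induction zs arbitrary: w)
  case Nil
  then show ?case by simp
next
  case (Cons z zs)
  show ?case
  proof (cases "z \<le> a")
    case True
    then show ?thesis by (simp add: comp_def)
  next
    case False
    have IH: "(w \<circ> Suc) 0 * a + wsum (w \<circ> Suc \<circ> Suc) zs \<le> wsum (w \<circ> Suc) (ins a zs)"
      using Cons.IH[of "w \<circ> Suc"] Cons.prems anti_Suc[OF Cons.prems(2)] by (simp add: comp_def)
    have w: "w 1 \<le> w 0" using Cons.prems(2) by (simp add: anti_def)
    have "(w 0 - w 1) * (a - z) \<le> 0"
      using w False by (intro mult_nonneg_nonpos) auto
    moreover have "(\<lambda>a. w (Suc a)) \<circ> Suc = w \<circ> Suc \<circ> Suc" by (simp add: comp_def)
    ultimately show ?thesis using IH False by (simp add: algebra_simps)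
  qed
qed

lemma wsum_dsort: "anti w \<Longrightarrow> wsum w xs \<le> wsum w (dsort xs)"
proof (induction xs arbitrary: w)
  case Nil
  then show ?case by simp
next
  case (Cons a xs)
  have "wsum (w \<circ> Suc) xs \<le> wsum (w \<circ> Suc) (dsort xs)" using Cons anti_Suc by auto
  moreover have "w 0 * a + wsum (w \<circ> Suc) (dsort xs) \<le> wsum w (ins a (dsort xs))"
    using wsum_ins[OF sorted_dsort Cons.prems] .
  ultimately show ?case by simp
qed

lemma desc_unique:
  assumes "sorted_wrt (\<ge>) ds" "mset ds = mset xs"
  shows "ds = rev (sort xs)"
proof -
  have "sort xs = rev ds"
    by (rule properties_for_sort) (use assms in \<open>auto simp: sorted_wrt_rev\<close>)
  then show ?thesis by simp
qed

lemma rearr: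
  assumes "anti w" "mset xs = mset zs"
  shows "wsum w xs \<le> wsum w (rev (sort zs))"
proof -
  have "dsort xs = rev (sort zs)"
    by (rule desc_unique) (use assms in \<open>auto simp: sorted_dsort mset_dsort\<close>)
  then show ?thesis using wsum_dsort[OF assms(1), of xs] by simp
qed

lemma owl_wsum:
  assumes "0 < p"
  shows "owl p w z = wsum (\<lambda>k. w (min k (p - 1))) (abs_sorted_desc p z)"
  unfolding wsum_eq owl_def
  by (rule sum.cong) (auto simp: abs_sorted_desc_def)

lemma anti_trunc:
  assumes "owl_weights p w"
  shows "anti (\<lambda>k. w (min k (p - 1)))"
  using assms unfolding anti_def owl_weights_def
  by (metis diff_less less_numeral_extra(1) min.mono min.cobounded2 le_less_trans order_refl)

lemma owl_gain:
  assumes W: "owl_weights p w" and ij: "i < p" "j < p" "i \<noteq> j"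
    and gt: "\<bar>x' j\<bar> < \<bar>x' i\<bar>"
    and same: "\<forall>k<p. k \<noteq> i \<longrightarrow> k \<noteq> j \<longrightarrow> \<bar>x' k\<bar> = \<bar>x k\<bar>"
    and ei: "\<bar>x i\<bar> = \<bar>x' i\<bar> + e" and ej: "\<bar>x j\<bar> = \<bar>x' j\<bar> - e" and e: "0 \<le> e"
  shows "owl p w x' + e * owl_gap p w \<le> owl p w x"
proof -
  have p0: "0 < p" using W by (simp add: owl_weights_def)
  define w' where "w' = (\<lambda>k. w (min k (p - 1)))"
  have aw: "anti w'" using anti_trunc[OF W] by (simp add: w'_def)
  define L' where "L' = abs_sorted_desc p x'"
  have msL: "mset L' = mset (map (\<lambda>k. \<bar>x' k\<bar>) [0..<p])"
    by (simp add: L'_def abs_sorted_desc_def)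
  then obtain \<sigma> where perm: "\<sigma> permutes {..<length (map (\<lambda>k. \<bar>x' k\<bar>) [0..<p])}"
      and pl: "permute_list \<sigma> (map (\<lambda>k. \<bar>x' k\<bar>) [0..<p]) = L'"
    by (metis mset_eq_permutation)
  have perm': "\<sigma> permutes {..<p}" using perm by simp
  have sig_lt: "\<And>k. k < p \<Longrightarrow> \<sigma> k < p" using permutes_in_image[OF perm'] by simp
  have Lnth: "\<And>k. k < p \<Longrightarrow> L' ! k = \<bar>x' (\<sigma> k)\<bar>"
    using pl[symmetric] permute_list_nth[OF perm] sig_lt by auto
  have lenL: "length L' = p" by (simp add: L'_def abs_sorted_desc_def)
  define xs where "xs = permute_list \<sigma> (map (\<lambda>k. \<bar>x k\<bar>) [0..<p])"
  have msx: "mset xs = mset (map (\<lambda>k. \<bar>x k\<bar>) [0..<p])"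
    unfolding xs_def by (rule mset_permute_list) (use perm' in simp)
  have xsnth: "\<And>k. k < p \<Longrightarrow> xs ! k = \<bar>x (\<sigma> k)\<bar>"
    unfolding xs_def using permute_list_nth[of \<sigma> "map (\<lambda>k. \<bar>x k\<bar>) [0..<p]"] perm' sig_lt by auto
  have lenx: "length xs = p" by (simp add: xs_def)
  have R: "wsum w' xs \<le> owl p w x"
    using rearr[OF aw msx] owl_wsum[OF p0, of w x] by (simp add: w'_def abs_sorted_desc_def)
  have O': "owl p w x' = wsum w' L'"
    using owl_wsum[OF p0, of w x'] by (simp add: w'_def L'_def)
  define a where "a = inv \<sigma> i"
  define b where "b = inv \<sigma> j"
  have a: "a < p" "\<sigma> a = i" using permutes_inverses[OF perm'] permutes_in_image[OF permutes_inv[OF perm']] ij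
    by (auto simp: a_def)
  have b: "b < p" "\<sigma> b = j" using permutes_inverses[OF perm'] permutes_in_image[OF permutes_inv[OF perm']] ij
    by (auto simp: b_def)
  have sorted: "sorted_wrt (\<ge>) L'"
    by (simp add: L'_def abs_sorted_desc_def sorted_wrt_rev)
  have ab: "a < b"
  proof (rule ccontr)
    assume "\<not> a < b"
    moreover have "a \<noteq> b" using a b ij by auto
    ultimately have "b < a" by simp
    then have "L' ! a \<le> L' ! b" using sorted_wrt_nth_less[OF sorted, of b a] a lenL by simp
    then show False using Lnth a b gt by simp
  qed
  have inj: "inj_on \<sigma> {..<p}" using permutes_inj_on[OF perm'] .
  have diff: "\<And>k. k < p \<Longrightarrow> w' k * xs ! k - w' k * L' ! k
      = (if k = a then w' a * e else 0) - (if k = b then w' b * e else 0)"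
  proof -
    fix k assume k: "k < p"
    show "w' k * xs ! k - w' k * L' ! k
      = (if k = a then w' a * e else 0) - (if k = b then w' b * e else 0)"
    proof (cases "k = a")
      case True
      then show ?thesis using xsnth Lnth k a ab ei by (simp add: algebra_simps)
    next
      case F1: False
      show ?thesis
      proof (cases "k = b")
        case True
        have "w' b * \<bar>x j\<bar> - w' b * \<bar>x' j\<bar> = - (w' b * e)"
          unfolding ej by (simp add: right_diff_distrib)
        then show ?thesis using xsnth Lnth k b ab True by simp
      next
        case False
        have "\<sigma> k \<noteq> i" using F1 a k inj by (metis inj_onD lessThan_iff)
        moreover have "\<sigma> k \<noteq> j" using False b k inj by (metis inj_onD lessThan_iff)
        ultimately show ?thesis using same sig_lt[OF k] xsnth[OF k] Lnth[OF k] F1 False by simp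
      qed
    qed
  qed
  have "wsum w' xs - wsum w' L' = (\<Sum>k<p. w' k * xs ! k - w' k * L' ! k)"
    by (simp add: wsum_eq lenx lenL sum_subtractf)
  also have "\<dots> = (\<Sum>k<p. (if k = a then w' a * e else 0) - (if k = b then w' b * e else 0))"
    by (rule sum.cong) (auto simp: diff)
  also have "\<dots> = w' a * e - w' b * e"
    using a b by (simp add: sum_subtractf)
  finally have D: "wsum w' xs - wsum w' L' = (w' a - w' b) * e" by (simp add: algebra_simps)
  have wa: "w' a = w a" "w' b = w b" "w' (Suc a) = w (Suc a)" using a b ab by (auto simp: w'_def)
  have "w (Suc a) \<ge> w b" using W ab b by (simp add: owl_weights_def)
  moreover have "finite {l. Suc l < p}" by (rule finite_subset[of _ "{..<p}"]) auto
  then have "finite {w l - w (Suc l) |l. Suc l < p}" by simp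
  moreover have "owl_gap p w \<le> w a - w (Suc a)"
    using calculation(2) unfolding owl_gap_def using ab b by (intro Min_le) auto
  ultimately have "owl_gap p w \<le> w' a - w' b" using wa by simp
  then have "e * owl_gap p w \<le> e * (w' a - w' b)" using e by (rule mult_left_mono)
  then show ?thesis using R O' D by (simp add: algebra_simps)
qed


lemma sum_abs_le_sqrt:
  fixes v :: "nat \<Rightarrow> real"
  shows "(\<Sum>r<n. \<bar>v r\<bar>) \<le> sqrt (real n * (\<Sum>r<n. (v r)^2))"
proof (rule real_le_rsqrt)
  have "(\<Sum>r<n. \<bar>v r\<bar> * 1)\<^sup>2 \<le> (\<Sum>r<n. \<bar>v r\<bar>\<^sup>2) * (\<Sum>r<n. 1\<^sup>2)"
    by (rule Cauchy_Schwarz_ineq_sum)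
  then show "(\<Sum>r<n. \<bar>v r\<bar>)\<^sup>2 \<le> real n * (\<Sum>r<n. (v r)^2)" by (simp add: mult.commute)
qed

lemma main_gt:
  fixes n p :: nat and A :: "nat \<Rightarrow> nat \<Rightarrow> real" and y w x :: "nat \<Rightarrow> real"
  assumes normalized: "\<forall>k<p. sqrt (\<Sum>r<n. (A r k)^2) = 1"
    and weights: "owl_weights p w"
    and minimizer: "\<forall>z. owl_l1_obj n p A y w x \<le> owl_l1_obj n p A y w z"
    and ij: "i < p" "j < p" "i \<noteq> j" and gt: "\<bar>x j\<bar> < \<bar>x i\<bar>"
    and H: "sqrt (real n * (2 - 2 * (\<Sum>r<n. A r i * A r j) * sgn (x i * x j))) < owl_gap p w"
  shows False
proof -
  define \<rho> where "\<rho> = (\<Sum>r<n. A r i * A r j)"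
  have xi0: "x i \<noteq> 0" using gt by auto
  define s where "s = sgn (x i)"
  define t where "t = (if x j \<noteq> 0 then sgn (x j) else if s * \<rho> \<ge> 0 then 1 else (-1::real))"
  have s2: "s^2 = 1" using xi0 by (simp add: s_def sgn_if)
  have t2: "t^2 = 1" by (simp add: t_def sgn_if)
  have st: "\<rho> * sgn (x i * x j) \<le> s * t * \<rho>"
    using xi0 by (auto simp: s_def t_def sgn_mult mult_ac)
  define e where "e = (\<bar>x i\<bar> - \<bar>x j\<bar>) / 4"
  have e0: "0 < e" using gt by (simp add: e_def)
  define x' where "x' = x(i := x i - e * s, j := x j + e * t)"
  have eli: "e < \<bar>x i\<bar>" using gt by (simp add: e_def)
  have x'i: "\<bar>x' i\<bar> = \<bar>x i\<bar> - e"
  proof -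
    have "x' i = x i - e * s" using ij by (simp add: x'_def)
    then show ?thesis using eli e0 by (cases "x i > 0") (auto simp: s_def)
  qed
  have x'j: "\<bar>x' j\<bar> = \<bar>x j\<bar> + e"
  proof -
    have "x' j = x j + e * t" by (simp add: x'_def)
    then show ?thesis using e0 by (cases "x j > 0"; cases "x j < 0") (auto simp: t_def)
  qed
  have e2: "2 * e + \<bar>x j\<bar> < \<bar>x i\<bar>" using gt by (simp add: e_def field_simps)
  have OW: "owl p w x' + e * owl_gap p w \<le> owl p w x"
    by (rule owl_gain[OF weights ij, of x' x e]) (use x'i x'j e2 e0 ij in \<open>auto simp: x'_def\<close>)
  define v where "v r = t * A r j - s * A r i" for r
  have rowdiff: "(\<Sum>k<p. A r k * x' k) = (\<Sum>k<p. A r k * x k) + e * v r" for r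
  proof -
    have "\<And>k. A r k * x' k = A r k * x k + (if k = i then - (e * s * A r i) else 0)
       + (if k = j then e * t * A r j else 0)"
      using ij by (auto simp: x'_def algebra_simps)
    then have "(\<Sum>k<p. A r k * x' k) = (\<Sum>k<p. A r k * x k + (if k = i then - (e * s * A r i) else 0)
       + (if k = j then e * t * A r j else 0))" by simp
    also have "\<dots> = (\<Sum>k<p. A r k * x k) - e * s * A r i + e * t * A r j"
      using ij by (simp add: sum.distrib)
    finally show ?thesis by (simp add: v_def algebra_simps)
  qed
  have loss: "(\<Sum>r<n. \<bar>(\<Sum>k<p. A r k * x' k) - y r\<bar>)
      \<le> (\<Sum>r<n. \<bar>(\<Sum>k<p. A r k * x k) - y r\<bar>) + e * (\<Sum>r<n. \<bar>v r\<bar>)"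
  proof -
    have "(\<Sum>r<n. \<bar>(\<Sum>k<p. A r k * x' k) - y r\<bar>)
      \<le> (\<Sum>r<n. \<bar>(\<Sum>k<p. A r k * x k) - y r\<bar> + e * \<bar>v r\<bar>)"
    proof (rule sum_mono)
      fix r
      have "\<bar>(\<Sum>k<p. A r k * x k) - y r + e * v r\<bar> \<le> \<bar>(\<Sum>k<p. A r k * x k) - y r\<bar> + \<bar>e * v r\<bar>"
        by (rule abs_triangle_ineq)
      then show "\<bar>(\<Sum>k<p. A r k * x' k) - y r\<bar> \<le> \<bar>(\<Sum>k<p. A r k * x k) - y r\<bar> + e * \<bar>v r\<bar>"
        unfolding rowdiff using e0 by (simp add: abs_mult algebra_simps)
    qed
    then show ?thesis by (simp add: sum.distrib sum_distrib_left)
  qed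
  have sq: "(\<Sum>r<n. (A r k)^2) = 1" if "k < p" for k
    using normalized that by auto
  have "(\<Sum>r<n. (v r)^2) = t^2 * (\<Sum>r<n. (A r j)^2) + s^2 * (\<Sum>r<n. (A r i)^2) - 2 * s * t * \<rho>"
    by (simp add: v_def power2_eq_square algebra_simps sum.distrib sum_subtractf sum_distrib_left \<rho>_def)
  also have "\<dots> = 2 - 2 * s * t * \<rho>" using sq ij s2 t2 by simp
  finally have V: "(\<Sum>r<n. (v r)^2) = 2 - 2 * s * t * \<rho>" .
  have "sqrt (real n * (\<Sum>r<n. (v r)^2)) \<le> sqrt (real n * (2 - 2 * \<rho> * sgn (x i * x j)))"
    unfolding V using st by (intro real_sqrt_le_mono mult_left_mono) auto
  then have B: "(\<Sum>r<n. \<bar>v r\<bar>) < owl_gap p w"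
    using sum_abs_le_sqrt[of v n] H unfolding \<rho>_def by linarith
  have "owl_l1_obj n p A y w x' < owl_l1_obj n p A y w x"
  proof -
    have "e * (\<Sum>r<n. \<bar>v r\<bar>) < e * owl_gap p w" using B e0 by simp
    then show ?thesis using loss OW unfolding owl_l1_obj_def by linarith
  qed
  then show False using minimizer by (meson not_le)
qed

theorem corollary3:
  fixes n p :: nat and A :: "nat \<Rightarrow> nat \<Rightarrow> real" and y w xhat :: "nat \<Rightarrow> real"
  assumes centered: "\<forall>k<p. (\<Sum>r<n. A r k) = 0"
    and normalized: "\<forall>k<p. sqrt (\<Sum>r<n. (A r k)^2) = 1"
    and weights: "owl_weights p w"
    and minimizer: "\<forall>x. owl_l1_obj n p A y w xhat \<le> owl_l1_obj n p A y w x"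
  shows "\<forall>i<p. \<forall>j<p.
           sqrt (real n * (2 - 2 * (\<Sum>r<n. A r i * A r j) * sgn (xhat i * xhat j))) < owl_gap p w
           \<longrightarrow> \<bar>xhat i\<bar> = \<bar>xhat j\<bar>"
proof (intro allI impI)
  fix i j assume i: "i < p" and j: "j < p"
    and H: "sqrt (real n * (2 - 2 * (\<Sum>r<n. A r i * A r j) * sgn (xhat i * xhat j))) < owl_gap p w"
  show "\<bar>xhat i\<bar> = \<bar>xhat j\<bar>"
  proof (rule ccontr)
    assume ne: "\<bar>xhat i\<bar> \<noteq> \<bar>xhat j\<bar>"
    then have ij: "i \<noteq> j" by auto
    show False
    proof (cases "\<bar>xhat j\<bar> < \<bar>xhat i\<bar>")
      case True
      show False by (rule main_gt[OF normalized weights minimizer i j ij True H])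
    next
      case False
      then have lt: "\<bar>xhat i\<bar> < \<bar>xhat j\<bar>" using ne by simp
      have H': "sqrt (real n * (2 - 2 * (\<Sum>r<n. A r j * A r i) * sgn (xhat j * xhat i))) < owl_gap p w"
        using H by (simp add: mult.commute)
      show False using main_gt[OF normalized weights minimizer j i] ij lt H' by auto
    qed
  qed
qed

end
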